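(* Consider a two-asset G3M with fee parameter $\gamma\in(0,1)$ and a reference price process $(S_t)_{t\ge 0}$, $S_t>0$. Arbitrageurs arrive at deterministic times $0=\tau_0<\tau_1<\dots<\tau_m\le T$. The pool price $P_t>0$ is constant on each interval $[\tau_i,\tau_{i+1})$ (and on $[\tau_m,\infty)$), and at each arrival time it is updated so that, writing $Z_t=\ln(S_t/P_t)$ and $Z_{\tau_i^-}:=\ln S_{\tau_i}-\ln P_{\tau_{i-1}}$ for $i\ge1$ (and $Z_{0^-}:=\ln S_0-\ln P_0$), $$Z_{\tau_i}=\max\{\min\{Z_{\tau_i^-},-\ln\gamma\},\ln\gamma\}.$$ Assume $\gamma P_0\le S_0\le\gamma^{-1}P_0$. Define $$J_i=\max\{\min\{Z_{\tau_i^-},-\ln\gamma\},\ln\gamma\}-Z_{\tau_i^-},\quad L_t=\sum_{i:\tau_i\le t}\{J_i\}^+,\quad U_t=\sum_{i:\tau_i\le t}\{J_i\}^-,$$ where $\{a\}^+=\max\{a,0\}$ and $\{a\}^-=\max\{-a,0\}$. Then for all $t\ge0$, $$\ln P_t=\ln P_0+U_t-L_t,\qquad Z_t=\ln S_t-\ln P_0+L_t-U_t,$$ and moreover $$L_t=\sup_{i:\tau_i\le t}\big(-\ln(\gamma P_0)+\ln S_{\tau_i}-U_{\tau_i}\big)^-,\qquad U_t=\sup_{i:\tau_i\le t}\big(\ln(\gamma^{-1}P_0)-\ln S_{\tau_i}-L_{\tau_i}\big)^-,$$ where $(a)^-=\max\{-a,0\}$.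
   Context: Setting: a G3M (geometric mean market maker) pool for assets $X,Y$ with proportional fee $1-\gamma$; $P_t$ is the pool price of $X$ in units of $Y$, $S_t$ the price of $X$ in units of $Y$ on a frictionless external reference market with infinite liquidity. There are no noise traders, so the pool price changes only at arbitrageur arrival times, where arbitrageurs trade just enough to bring the mispricing $Z=\ln(S/P)$ back into the no-arbitrage interval $[\ln\gamma,-\ln\gamma]$ (and do nothing if it is already inside), as encoded in the update rule above. *)

theory Defs
  imports Complex_Main
begin

definition pos_part :: "real \<Rightarrow> real" where
  "pos_part a = max a 0"

definition neg_part :: "real \<Rightarrow> real" where
  "neg_part a = max (- a) 0"

definition clampg :: "real \<Rightarrow> real \<Rightarrow> real" where
  "clampg \<gamma> z = max (min z (- ln \<gamma>)) (ln \<gamma>)"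

definition Zpre :: "(real \<Rightarrow> real) \<Rightarrow> (real \<Rightarrow> real) \<Rightarrow> (nat \<Rightarrow> real) \<Rightarrow> nat \<Rightarrow> real" where
  "Zpre S P \<tau> i = (if i = 0 then ln (S 0) - ln (P 0) else ln (S (\<tau> i)) - ln (P (\<tau> (i - 1))))"

definition Jump :: "real \<Rightarrow> (real \<Rightarrow> real) \<Rightarrow> (real \<Rightarrow> real) \<Rightarrow> (nat \<Rightarrow> real) \<Rightarrow> nat \<Rightarrow> real" where
  "Jump \<gamma> S P \<tau> i = clampg \<gamma> (Zpre S P \<tau> i) - Zpre S P \<tau> i"

definition arrived :: "nat \<Rightarrow> (nat \<Rightarrow> real) \<Rightarrow> real \<Rightarrow> nat set" where
  "arrived m \<tau> t = {i. i \<le> m \<and> \<tau> i \<le> t}"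

definition Lproc :: "real \<Rightarrow> (real \<Rightarrow> real) \<Rightarrow> (real \<Rightarrow> real) \<Rightarrow> nat \<Rightarrow> (nat \<Rightarrow> real) \<Rightarrow> real \<Rightarrow> real" where
  "Lproc \<gamma> S P m \<tau> t = (\<Sum>i\<in>arrived m \<tau> t. pos_part (Jump \<gamma> S P \<tau> i))"

definition Uproc :: "real \<Rightarrow> (real \<Rightarrow> real) \<Rightarrow> (real \<Rightarrow> real) \<Rightarrow> nat \<Rightarrow> (nat \<Rightarrow> real) \<Rightarrow> real \<Rightarrow> real" where
  "Uproc \<gamma> S P m \<tau> t = (\<Sum>i\<in>arrived m \<tau> t. neg_part (Jump \<gamma> S P \<tau> i))"

end

theory Submission
  imports Defs
begin

lemma tau_le_aux:
  assumes "\<forall>i<m. \<tau> i < (\<tau> (Suc i)::real)"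
  shows "i < j \<Longrightarrow> j \<le> m \<Longrightarrow> \<tau> i < \<tau> j"
proof (induction j)
  case 0 then show ?case by simp
next
  case (Suc j)
  have step: "\<tau> j < \<tau> (Suc j)" using assms Suc.prems(2) by simp
  show ?case
  proof (cases "i = j")
    case True then show ?thesis using step by simp
  next
    case False
    then have "\<tau> i < \<tau> j" using Suc by simp
    then show ?thesis using step by simp
  qed
qed

lemma tau_le_aux2:
  assumes "\<forall>i<m. \<tau> i < (\<tau> (Suc i)::real)"
  shows "i \<le> j \<Longrightarrow> j \<le> m \<Longrightarrow> \<tau> i \<le> \<tau> j"
  using tau_le_aux[OF assms, of i j] by (cases "i = j") auto

lemma arrived_tau:
  assumes "\<forall>i<m. \<tau> i < (\<tau> (Suc i)::real)" "i \<le> m"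
  shows "arrived m \<tau> (\<tau> i) = {..i}"
proof
  show "arrived m \<tau> (\<tau> i) \<subseteq> {..i}"
  proof
    fix j assume "j \<in> arrived m \<tau> (\<tau> i)"
    then have "j \<le> m" "\<tau> j \<le> \<tau> i" unfolding arrived_def by auto
    then show "j \<in> {..i}" using tau_le_aux[OF assms(1), of i j] by (cases "i < j") auto
  qed
  show "{..i} \<subseteq> arrived m \<tau> (\<tau> i)"
    using tau_le_aux2[OF assms(1)] assms(2) unfolding arrived_def by auto
qed

lemma clamp_props:
  fixes g z :: real
  assumes "0 < g" "g < 1"
  shows "ln g \<le> clampg g z" "clampg g z \<le> - ln g"
    "clampg g z > z \<Longrightarrow> clampg g z = ln g"
    "clampg g z < z \<Longrightarrow> clampg g z = - ln g"
proof -
  have "ln g < 0" using assms by simp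
  then show "ln g \<le> clampg g z" "clampg g z \<le> - ln g"
    "clampg g z > z \<Longrightarrow> clampg g z = ln g"
    "clampg g z < z \<Longrightarrow> clampg g z = - ln g"
    unfolding clampg_def by auto
qed
theorem mainTheorem1:
  fixes \<gamma> T :: real and S P :: "real \<Rightarrow> real" and \<tau> :: "nat \<Rightarrow> real" and m :: nat
  assumes gamma: "0 < \<gamma>" "\<gamma> < 1"
    and Spos: "\<forall>t\<ge>0. S t > 0"
    and Ppos: "\<forall>t\<ge>0. P t > 0"
    and tau0: "\<tau> 0 = 0"
    and tau_mono: "\<forall>i<m. \<tau> i < \<tau> (Suc i)"
    and tauT: "\<tau> m \<le> T"
    and Pconst: "\<forall>i<m. \<forall>t. \<tau> i \<le> t \<and> t < \<tau> (Suc i) \<longrightarrow> P t = P (\<tau> i)"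
    and Pconst_last: "\<forall>t. \<tau> m \<le> t \<longrightarrow> P t = P (\<tau> m)"
    and update: "\<forall>i\<le>m. ln (S (\<tau> i)) - ln (P (\<tau> i)) = clampg \<gamma> (Zpre S P \<tau> i)"
    and init: "\<gamma> * P 0 \<le> S 0" "S 0 \<le> P 0 / \<gamma>"
  shows "\<forall>t\<ge>0.
     ln (P t) = ln (P 0) + Uproc \<gamma> S P m \<tau> t - Lproc \<gamma> S P m \<tau> t
   \<and> ln (S t) - ln (P t) = ln (S t) - ln (P 0) + Lproc \<gamma> S P m \<tau> t - Uproc \<gamma> S P m \<tau> t
   \<and> Lproc \<gamma> S P m \<tau> t = (SUP i\<in>arrived m \<tau> t.
        neg_part (- ln (\<gamma> * P 0) + ln (S (\<tau> i)) - Uproc \<gamma> S P m \<tau> (\<tau> i)))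
   \<and> Uproc \<gamma> S P m \<tau> t = (SUP i\<in>arrived m \<tau> t.
        neg_part (ln (P 0 / \<gamma>) - ln (S (\<tau> i)) - Lproc \<gamma> S P m \<tau> (\<tau> i)))"
proof (intro allI impI)
  fix t :: real assume t0: "0 \<le> t"
  define s where "s i = ln (S (\<tau> i))" for i
  define p where "p i = ln (P (\<tau> i))" for i
  define J where "J i = Jump \<gamma> S P \<tau> i" for i
  define L where "L i = (\<Sum>j\<in>{..i}. pos_part (J j))" for i
  define U where "U i = (\<Sum>j\<in>{..i}. neg_part (J j))" for i
  have J0: "J 0 = 0" using update tau0 unfolding J_def Jump_def Zpre_def by auto
  have JS: "J (Suc i) = p i - p (Suc i)" if "Suc i \<le> m" for i
  proof -
    have z: "Zpre S P \<tau> (Suc i) = s (Suc i) - p i" unfolding Zpre_def s_def p_def by simp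
    have u: "s (Suc i) - p (Suc i) = clampg \<gamma> (Zpre S P \<tau> (Suc i))"
      using update that unfolding s_def p_def by blast
    show ?thesis unfolding J_def Jump_def using z u by simp
  qed
  have Zc: "s i - p i = clampg \<gamma> (Zpre S P \<tau> i)" if "i \<le> m" for i
    using update that unfolding s_def p_def by auto
  have Jc: "J i = (s i - p i) - Zpre S P \<tau> i" if "i \<le> m" for i
    using Zc[OF that] unfolding J_def Jump_def by simp
  have LU: "L i - U i = p 0 - p i" if "i \<le> m" for i
    using that
  proof (induction i)
    case 0 then show ?case using J0 by (simp add: L_def U_def pos_part_def neg_part_def)
  next
    case (Suc i)
    have "L (Suc i) - U (Suc i) = (L i - U i) + (pos_part (J (Suc i)) - neg_part (J (Suc i)))"
      by (simp add: L_def U_def)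
    also have "pos_part (J (Suc i)) - neg_part (J (Suc i)) = J (Suc i)"
      by (simp add: pos_part_def neg_part_def)
    finally show ?case using Suc JS[OF Suc.prems] by simp
  qed
  have Zeq: "s i - p 0 + L i - U i = s i - p i" if "i \<le> m" for i
    using LU[OF that] by simp
  have Zb: "ln \<gamma> \<le> s i - p 0 + L i - U i \<and> s i - p 0 + L i - U i \<le> - ln \<gamma>" if "i \<le> m" for i
    using Zc[OF that] clamp_props(1,2)[OF gamma, of "Zpre S P \<tau> i"] Zeq[OF that] by linarith
  have Jpos: "s j - p 0 + L j - U j = ln \<gamma>" if "j \<le> m" "J j > 0" for j
  proof -
    have "clampg \<gamma> (Zpre S P \<tau> j) > Zpre S P \<tau> j"
      using that(2) Jc[OF that(1)] Zc[OF that(1)] by linarith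
    from clamp_props(3)[OF gamma this] show ?thesis using Zc[OF that(1)] Zeq[OF that(1)] by linarith
  qed
  have Jneg: "s j - p 0 + L j - U j = - ln \<gamma>" if "j \<le> m" "J j < 0" for j
  proof -
    have "clampg \<gamma> (Zpre S P \<tau> j) < Zpre S P \<tau> j"
      using that(2) Jc[OF that(1)] Zc[OF that(1)] by linarith
    from clamp_props(4)[OF gamma this] show ?thesis using Zc[OF that(1)] Zeq[OF that(1)] by linarith
  qed
  have Lmono: "L i \<le> L k" if "i \<le> k" for i k
    unfolding L_def using that
    by (intro sum_mono2) (auto simp: pos_part_def)
  have Umono: "U i \<le> U k" if "i \<le> k" for i k
    unfolding U_def using that
    by (intro sum_mono2) (auto simp: neg_part_def)
  have L0: "L i \<ge> 0" for i unfolding L_def by (intro sum_nonneg) (auto simp: pos_part_def)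
  have U0: "U i \<ge> 0" for i unfolding U_def by (intro sum_nonneg) (auto simp: neg_part_def)
  have Lwit: "L k = 0 \<or> (\<exists>j\<le>k. J j > 0 \<and> L k = L j)" for k
  proof (induction k)
    case 0 then show ?case using J0 by (simp add: L_def pos_part_def)
  next
    case (Suc k)
    show ?case
    proof (cases "J (Suc k) > 0")
      case True then show ?thesis by blast
    next
      case False
      then have "L (Suc k) = L k" by (simp add: L_def pos_part_def)
      then show ?thesis using Suc by (metis le_SucI)
    qed
  qed
  have Uwit: "U k = 0 \<or> (\<exists>j\<le>k. J j < 0 \<and> U k = U j)" for k
  proof (induction k)
    case 0 then show ?case using J0 by (simp add: U_def neg_part_def)
  next
    case (Suc k)
    show ?case
    proof (cases "J (Suc k) < 0")
      case True then show ?thesis by blast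
    next
      case False
      then have "U (Suc k) = U k" by (simp add: U_def neg_part_def)
      then show ?thesis using Suc by (metis le_SucI)
    qed
  qed
  define A where "A = arrived m \<tau> t"
  have finA: "finite A" unfolding A_def arrived_def by simp
  have A0: "0 \<in> A" unfolding A_def arrived_def using tau0 t0 by simp
  define k where "k = Max A"
  have kA: "k \<in> A" unfolding k_def using Max_in[OF finA] A0 by auto
  have km: "k \<le> m" using kA unfolding A_def arrived_def by simp
  have tk: "\<tau> k \<le> t" using kA unfolding A_def arrived_def by simp
  have Aeq: "A = {..k}"
  proof
    show "A \<subseteq> {..k}" using Max_ge[OF finA] unfolding k_def by auto
    show "{..k} \<subseteq> A"
    proof
      fix j assume "j \<in> {..k}"
      then have jk: "j \<le> k" by simp
      then have "\<tau> j \<le> \<tau> k" using tau_le_aux2[OF tau_mono] km by blast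
      then show "j \<in> A" using km tk jk unfolding A_def arrived_def by simp
    qed
  qed
  have Pt: "P t = P (\<tau> k)"
  proof (cases "k < m")
    case True
    have "Suc k \<notin> A"
    proof
      assume "Suc k \<in> A"
      then have "Suc k \<le> k" unfolding k_def using Max_ge[OF finA] by blast
      then show False by simp
    qed
    then have "\<not> \<tau> (Suc k) \<le> t" using True unfolding A_def arrived_def by simp
    then have "t < \<tau> (Suc k)" by simp
    with True tk show ?thesis using Pconst by blast
  next
    case False
    then have "k = m" using km by simp
    then have "\<tau> m \<le> t" using tk by simp
    then show ?thesis using Pconst_last \<open>k = m\<close> by blast
  qed
  have Lt: "Lproc \<gamma> S P m \<tau> t = L k" unfolding Lproc_def L_def J_def using Aeq A_def by simp
  have Ut: "Uproc \<gamma> S P m \<tau> t = U k" unfolding Uproc_def U_def J_def using Aeq A_def by simp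
  have Li: "Lproc \<gamma> S P m \<tau> (\<tau> i) = L i" if "i \<le> m" for i
    unfolding Lproc_def L_def J_def using arrived_tau[OF tau_mono that] by simp
  have Ui: "Uproc \<gamma> S P m \<tau> (\<tau> i) = U i" if "i \<le> m" for i
    unfolding Uproc_def U_def J_def using arrived_tau[OF tau_mono that] by simp
  have P0pos: "P 0 > 0" using Ppos by simp
  have p0: "p 0 = ln (P 0)" unfolding p_def using tau0 by simp
  have lnmul: "ln (\<gamma> * P 0) = ln \<gamma> + p 0" using gamma P0pos p0 by (simp add: ln_mult)
  have lndiv: "ln (P 0 / \<gamma>) = p 0 - ln \<gamma>" using gamma P0pos p0 by (simp add: ln_div)
  have part1: "ln (P t) = ln (P 0) + Uproc \<gamma> S P m \<tau> t - Lproc \<gamma> S P m \<tau> t"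
    using LU[OF km] Pt Lt Ut p0 unfolding p_def by simp
  have part3: "Lproc \<gamma> S P m \<tau> t = (SUP i\<in>arrived m \<tau> t.
        neg_part (- ln (\<gamma> * P 0) + ln (S (\<tau> i)) - Uproc \<gamma> S P m \<tau> (\<tau> i)))"
  proof -
    have eq: "(SUP i\<in>arrived m \<tau> t.
        neg_part (- ln (\<gamma> * P 0) + ln (S (\<tau> i)) - Uproc \<gamma> S P m \<tau> (\<tau> i)))
      = (SUP i\<in>{..k}. max (ln \<gamma> + p 0 - s i + U i) 0)"
      unfolding A_def[symmetric] Aeq
    proof (rule SUP_cong[OF refl])
        fix i assume "i \<in> {..k}"
        then have "i \<le> m" using km by simp
        from Ui[OF this] show "neg_part (- ln (\<gamma> * P 0) + ln (S (\<tau> i)) - Uproc \<gamma> S P m \<tau> (\<tau> i)) = max (ln \<gamma> + p 0 - s i + U i) 0"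
          unfolding lnmul s_def neg_part_def by simp
      qed
    have "(SUP i\<in>{..k}. max (ln \<gamma> + p 0 - s i + U i) 0) = L k"
    proof (rule cSup_eq_maximum)
      show "x \<le> L k" if "x \<in> (\<lambda>i. max (ln \<gamma> + p 0 - s i + U i) 0) ` {..k}" for x
        using that
      proof
        fix i assume "i \<in> {..k}" "x = max (ln \<gamma> + p 0 - s i + U i) 0"
        then show ?thesis
        using Zb[of i] Lmono[of i k] L0[of k] that km by auto
      qed
      have "\<exists>x\<in>{..k}. max (ln \<gamma> + p 0 - s x + U x) 0 = L k"
        using Lwit[of k]
      proof
        assume "L k = 0"
        then show ?thesis using Zb[of 0] Lmono[of 0 k] L0[of 0]
          by (intro bexI[of _ 0]) auto
      next
        assume "\<exists>j\<le>k. 0 < J j \<and> L k = L j"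
        then obtain j where "j \<le> k" "J j > 0" "L k = L j" by blast
        then show ?thesis using Jpos[of j] km L0[of j]
          by (intro bexI[of _ j]) auto
      qed
      then show "L k \<in> (\<lambda>i. max (ln \<gamma> + p 0 - s i + U i) 0) ` {..k}" by force
    qed
    then show ?thesis using eq Lt by simp
  qed
  have part4: "Uproc \<gamma> S P m \<tau> t = (SUP i\<in>arrived m \<tau> t.
        neg_part (ln (P 0 / \<gamma>) - ln (S (\<tau> i)) - Lproc \<gamma> S P m \<tau> (\<tau> i)))"
  proof -
    have eq: "(SUP i\<in>arrived m \<tau> t.
        neg_part (ln (P 0 / \<gamma>) - ln (S (\<tau> i)) - Lproc \<gamma> S P m \<tau> (\<tau> i)))
      = (SUP i\<in>{..k}. max (s i + L i - p 0 + ln \<gamma>) 0)"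
      unfolding A_def[symmetric] Aeq
    proof (rule SUP_cong[OF refl])
        fix i assume "i \<in> {..k}"
        then have "i \<le> m" using km by simp
        from Li[OF this] show "neg_part (ln (P 0 / \<gamma>) - ln (S (\<tau> i)) - Lproc \<gamma> S P m \<tau> (\<tau> i)) = max (s i + L i - p 0 + ln \<gamma>) 0"
          unfolding lndiv s_def neg_part_def by simp
      qed
    have "(SUP i\<in>{..k}. max (s i + L i - p 0 + ln \<gamma>) 0) = U k"
    proof (rule cSup_eq_maximum)
      show "x \<le> U k" if "x \<in> (\<lambda>i. max (s i + L i - p 0 + ln \<gamma>) 0) ` {..k}" for x
        using that
      proof
        fix i assume "i \<in> {..k}" "x = max (s i + L i - p 0 + ln \<gamma>) 0"
        then show ?thesis
        using Zb[of i] Umono[of i k] U0[of k] that km by auto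
      qed
      have "\<exists>x\<in>{..k}. max (s x + L x - p 0 + ln \<gamma>) 0 = U k"
        using Uwit[of k]
      proof
        assume "U k = 0"
        then show ?thesis using Zb[of 0] Umono[of 0 k] U0[of 0]
          by (intro bexI[of _ 0]) auto
      next
        assume "\<exists>j\<le>k. J j < 0 \<and> U k = U j"
        then obtain j where "j \<le> k" "J j < 0" "U k = U j" by blast
        then show ?thesis using Jneg[of j] km U0[of j]
          by (intro bexI[of _ j]) auto
      qed
      then show "U k \<in> (\<lambda>i. max (s i + L i - p 0 + ln \<gamma>) 0) ` {..k}" by force
    qed
    then show ?thesis using eq Ut by simp
  qed
  show "ln (P t) = ln (P 0) + Uproc \<gamma> S P m \<tau> t - Lproc \<gamma> S P m \<tau> t
   \<and> ln (S t) - ln (P t) = ln (S t) - ln (P 0) + Lproc \<gamma> S P m \<tau> t - Uproc \<gamma> S P m \<tau> t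
   \<and> Lproc \<gamma> S P m \<tau> t = (SUP i\<in>arrived m \<tau> t.
        neg_part (- ln (\<gamma> * P 0) + ln (S (\<tau> i)) - Uproc \<gamma> S P m \<tau> (\<tau> i)))
   \<and> Uproc \<gamma> S P m \<tau> t = (SUP i\<in>arrived m \<tau> t.
        neg_part (ln (P 0 / \<gamma>) - ln (S (\<tau> i)) - Lproc \<gamma> S P m \<tau> (\<tau> i)))"
    using part1 part3 part4 by simp
qed

end
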